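(* Let $\Gamma$ be a cellular decomposition of a closed disc, equipped with a positive function $\rho$ on its edges, and let $\Gamma^*$ be its dual as described in the context. Choose a boundary vertex $y_0\in(\partial\Gamma^* )_0$, a value $f_0\in\mathbb{C}$, and a complex value $\int_e\alpha$ for each boundary edge $e\in(\partial\Gamma^* )_1$ not incident to $y_0$. Then there exists a unique function $f$ on the vertices of $\Gamma^*$, harmonic at every vertex of $\Gamma^*$ not in $(\partial\Gamma^* )_0$, such that $f(y_0)=f_0$ and $\int_e df=\int_e\alpha$ for every $e\in(\partial\Gamma^* )_1$ not incident to $y_0$.
   Context: Let $\Sigma$ be the disc and $\Sigma^2=\Sigma\cup\bar\Sigma$ its double (glued to the oppositely oriented copy along the boundary); $\Gamma$ doubles to a cellular decomposition $\Gamma^2$ of the sphere $\Sigma^2$ with Poincaré dual $\Gamma^{2*}$. Define $\Gamma^*:=\Sigma\cap\Gamma^{2*}$: its interior vertices are the dual vertices of the faces of $\Gamma$, its edges are the duals of interior edges of $\Gamma$ together with, for each boundary edge $e$ of $\Gamma$, the half-edge of $e^*$ lying in $\Sigma$; these half-edges form $(\partial\Gamma^* )_1$, and their endpoints on $\partial\Sigma$ form $(\partial\Gamma^* )_0$. Faces of $\Gamma^{2*}$ not contained in $\Sigma$ are discarded. $\rho$ is extended to $\Gamma^*_1$ by $\rho(e^* )=1/\rho(e)$. For a function $f$ on the vertices of $\Gamma^*$, $\int_{(u,v)}df=f(v)-f(u)$, and $f$ is harmonic at a vertex $x$ with neighbours $x_1,\dots,x_n$ if $\sum_k\rho(x,x_k)(f(x)-f(x_k))=0$.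 *)

theory Defs
  imports Complex_Main
begin

text \<open>Gamma is encoded as a combinatorial map (darts D, vertex rotation sigma,
  fixed-point-free edge involution alpha) cellularly embedded in the sphere
  (connected, Euler characteristic 2), together with a distinguished face Out,
  the complement of the disc, whose boundary walk is a simple closed curve
  (no repeated vertex, no edge traversed twice).  The faces of Gamma are the
  remaining faces; faces are orbits of sigma o alpha.\<close>

definition orb :: "('d \<Rightarrow> 'd) \<Rightarrow> 'd \<Rightarrow> 'd set" where
  "orb f x = {(f ^^ n) x | n. True}"

definition map_vertices :: "'d set \<Rightarrow> ('d \<Rightarrow> 'd) \<Rightarrow> 'd set set" where
  "map_vertices D \<sigma> = orb \<sigma> ` D"

definition map_edges :: "'d set \<Rightarrow> ('d \<Rightarrow> 'd) \<Rightarrow> 'd set set" where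
  "map_edges D \<alpha> = orb \<alpha> ` D"

definition face_of :: "('d \<Rightarrow> 'd) \<Rightarrow> ('d \<Rightarrow> 'd) \<Rightarrow> 'd \<Rightarrow> 'd set" where
  "face_of \<sigma> \<alpha> d = orb (\<sigma> \<circ> \<alpha>) d"

definition map_faces :: "'d set \<Rightarrow> ('d \<Rightarrow> 'd) \<Rightarrow> ('d \<Rightarrow> 'd) \<Rightarrow> 'd set set" where
  "map_faces D \<sigma> \<alpha> = face_of \<sigma> \<alpha> ` D"

definition disc_map :: "'d set \<Rightarrow> ('d \<Rightarrow> 'd) \<Rightarrow> ('d \<Rightarrow> 'd) \<Rightarrow> 'd set \<Rightarrow> bool" where
  "disc_map D \<sigma> \<alpha> Out \<longleftrightarrow>
     finite D \<and> D \<noteq> {} \<and>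
     bij_betw \<sigma> D D \<and> bij_betw \<alpha> D D \<and>
     (\<forall>d\<in>D. \<alpha> d \<noteq> d \<and> \<alpha> (\<alpha> d) = d) \<and>
     (\<forall>x\<in>D. \<forall>y\<in>D. (x, y) \<in> (\<Union>d\<in>D. {(d, \<sigma> d), (d, \<alpha> d)})\<^sup>*) \<and>
     int (card (map_vertices D \<sigma>)) - int (card (map_edges D \<alpha>))
       + int (card (map_faces D \<sigma> \<alpha>)) = 2 \<and>
     Out \<in> map_faces D \<sigma> \<alpha> \<and>
     inj_on (orb \<sigma>) Out \<and>
     (\<forall>d\<in>Out. \<alpha> d \<notin> Out)"

text \<open>Vertices of the dual Gamma*: interior dual vertices (faces of Gamma) and
  boundary points (one for each boundary edge of Gamma; the boundary edge
  containing dart d of the outer face gives the boundary point Bd d).\<close>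

datatype 'd dual_vertex = FaceV "'d set" | Bd 'd

definition dual_vertices :: "'d set \<Rightarrow> ('d \<Rightarrow> 'd) \<Rightarrow> ('d \<Rightarrow> 'd) \<Rightarrow> 'd set \<Rightarrow> 'd dual_vertex set" where
  "dual_vertices D \<sigma> \<alpha> Out =
     FaceV ` (map_faces D \<sigma> \<alpha> - {Out}) \<union> Bd ` Out"

definition dual_nbr :: "('d \<Rightarrow> 'd) \<Rightarrow> ('d \<Rightarrow> 'd) \<Rightarrow> 'd set \<Rightarrow> 'd \<Rightarrow> 'd dual_vertex" where
  "dual_nbr \<sigma> \<alpha> Out d =
     (if \<alpha> d \<in> Out then Bd (\<alpha> d) else FaceV (face_of \<sigma> \<alpha> (\<alpha> d)))"

text \<open>Harmonicity at the interior dual vertex of face F; the dual edge crossing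
  the edge e of Gamma has weight 1 / rho e.  Neighbours are counted with
  multiplicity, one term per edge-side (dart) of F.\<close>
definition harmonic_at_face ::
  "('d \<Rightarrow> 'd) \<Rightarrow> ('d \<Rightarrow> 'd) \<Rightarrow> 'd set \<Rightarrow> ('d set \<Rightarrow> real) \<Rightarrow> ('d dual_vertex \<Rightarrow> complex) \<Rightarrow> 'd set \<Rightarrow> bool" where
  "harmonic_at_face \<sigma> \<alpha> Out \<rho> f F \<longleftrightarrow>
     (\<Sum>d\<in>F. complex_of_real (1 / \<rho> (orb \<alpha> d)) * (f (FaceV F) - f (dual_nbr \<sigma> \<alpha> Out d))) = 0"

text \<open>Integral of df over the boundary half-edge of the boundary edge with outer
  dart d, oriented from the interior dual vertex to the boundary point.\<close>
definition bd_integral ::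
  "('d \<Rightarrow> 'd) \<Rightarrow> ('d \<Rightarrow> 'd) \<Rightarrow> ('d dual_vertex \<Rightarrow> complex) \<Rightarrow> 'd \<Rightarrow> complex" where
  "bd_integral \<sigma> \<alpha> f d = f (Bd d) - f (FaceV (face_of \<sigma> \<alpha> (\<alpha> d)))"

end

theory Submission
  imports Defs "Jordan_Normal_Form.Determinant"
begin


lemma funpow_in: "f ` D \<subseteq> D \<Longrightarrow> x \<in> D \<Longrightarrow> (f ^^ n) x \<in> D"
  by (induction n) auto

lemma inj_funpow: "inj_on f D \<Longrightarrow> f ` D \<subseteq> D \<Longrightarrow> inj_on (f ^^ n) D"
proof (induction n)
  case 0 then show ?case by simp
next
  case (Suc n)
  show ?case unfolding funpow_Suc_right
    by (rule comp_inj_on[OF Suc.prems(1) inj_on_subset[OF Suc.IH[OF Suc.prems] Suc.prems(2)]])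
qed

lemma periodic:
  assumes "finite D" "bij_betw f D D" "x \<in> D"
  shows "\<exists>N>0. (f ^^ N) x = x"
proof -
  have sub: "f ` D \<subseteq> D" and inj: "inj_on f D" using assms(2) by (auto simp: bij_betw_def)
  let ?g = "\<lambda>i. (f ^^ i) x"
  have "range ?g \<subseteq> D" using funpow_in[OF sub assms(3)] by auto
  then have "finite (range ?g)" using assms(1) finite_subset by blast
  then have "\<not> inj ?g" using finite_imageD infinite_UNIV_nat by blast
  then obtain i j where ij: "i \<noteq> j" "?g i = ?g j" unfolding inj_def by blast
  then obtain i j where ij: "i < j" "?g i = ?g j"
    by (metis linorder_neqE_nat)
  obtain k where k: "j = i + k" "k > 0" using ij(1) less_imp_add_positive by blast
  have "(f ^^ i) ((f ^^ k) x) = (f ^^ i) x"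
    using ij(2) unfolding k(1) funpow_add comp_def by simp
  then have "(f ^^ k) x = x"
    using inj_funpow[OF inj sub, of i] funpow_in[OF sub assms(3), of k] assms(3)
    unfolding inj_on_def by blast
  then show ?thesis using k by blast
qed

lemma funpow_period: "(f ^^ N) x = x \<Longrightarrow> (f ^^ (N * t)) x = x"
proof (induction t)
  case (Suc t)
  have e: "N * Suc t = N * t + N" by simp
  have "(f ^^ (N * Suc t)) x = (f ^^ (N * t)) ((f ^^ N) x)" unfolding e funpow_add comp_def ..
  then show ?case using Suc by simp
qed simp

lemma orb_sub: assumes "f ` D \<subseteq> D" "x \<in> D" shows "orb f x \<subseteq> D"
proof
  fix y assume "y \<in> orb f x"
  then obtain n where "y = (f ^^ n) x" unfolding orb_def by auto
  then show "y \<in> D" using funpow_in[OF assms] by simp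
qed

lemma orb_self: "x \<in> orb f x"
  unfolding orb_def by (auto intro: exI[of _ 0])

lemma orb_step: "f x \<in> orb f x"
  unfolding orb_def by (auto intro!: exI[of _ 1])

lemma orb_eq:
  assumes "finite D" "bij_betw f D D" "x \<in> D" "y \<in> orb f x"
  shows "orb f y = orb f x"
proof -
  obtain k where k: "y = (f ^^ k) x" using assms(4) unfolding orb_def by auto
  obtain N where N: "N > 0" "(f ^^ N) x = x" using periodic[OF assms(1-3)] by auto
  show ?thesis
  proof
    show "orb f y \<subseteq> orb f x" unfolding orb_def k
      by (auto simp: funpow_add[symmetric, unfolded comp_def]) (metis comp_apply funpow_add)
    show "orb f x \<subseteq> orb f y"
    proof
      fix z assume "z \<in> orb f x"
      then obtain m where m: "z = (f ^^ m) x" unfolding orb_def by auto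
      have e: "m + N * k = (m + N * k - k) + k" using N by (simp add: trans_le_add2)
      have "z = (f ^^ (m + N * k)) x" unfolding m funpow_add comp_def funpow_period[OF N(2)] ..
      also have "\<dots> = (f ^^ (m + N * k - k)) y"
        unfolding k by (subst e) (simp add: funpow_add)
      finally show "z \<in> orb f y" unfolding orb_def by blast
    qed
  qed
qed


locale dm =
  fixes D :: "'d set" and \<sigma> \<alpha> :: "'d \<Rightarrow> 'd" and Out :: "'d set" and \<rho> :: "'d set \<Rightarrow> real" and d0 :: 'd
  assumes disc: "disc_map D \<sigma> \<alpha> Out"
    and rho: "\<forall>e\<in>map_edges D \<alpha>. \<rho> e > 0"
    and d0: "d0 \<in> Out"
begin

abbreviation "face \<equiv> face_of \<sigma> \<alpha>"
abbreviation "I \<equiv> map_faces D \<sigma> \<alpha> - {Out}"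

lemma finD: "finite D" and bs: "bij_betw \<sigma> D D" and ba: "bij_betw \<alpha> D D"
  and anf: "\<And>d. d \<in> D \<Longrightarrow> \<alpha> d \<noteq> d" and aa: "\<And>d. d \<in> D \<Longrightarrow> \<alpha> (\<alpha> d) = d"
  and conn: "\<And>x y. x \<in> D \<Longrightarrow> y \<in> D \<Longrightarrow> (x, y) \<in> (\<Union>d\<in>D. {(d, \<sigma> d), (d, \<alpha> d)})\<^sup>*"
  and OutF: "Out \<in> map_faces D \<sigma> \<alpha>" and injO: "inj_on (orb \<sigma>) Out"
  and Oa: "\<And>d. d \<in> Out \<Longrightarrow> \<alpha> d \<notin> Out"
  using disc unfolding disc_map_def by auto

lemma sD: "x \<in> D \<Longrightarrow> \<sigma> x \<in> D" using bs by (auto simp: bij_betw_def)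
lemma aD: "x \<in> D \<Longrightarrow> \<alpha> x \<in> D" using ba by (auto simp: bij_betw_def)
lemma bphi: "bij_betw (\<sigma> \<circ> \<alpha>) D D" using bij_betw_trans[OF ba bs] .
lemma phiD: "(\<sigma> \<circ> \<alpha>) ` D \<subseteq> D" using bphi by (auto simp: bij_betw_def)

lemma face_sub: "x \<in> D \<Longrightarrow> face x \<subseteq> D"
  unfolding face_of_def using orb_sub[OF phiD] by blast
lemma face_self: "x \<in> face x" unfolding face_of_def by (rule orb_self)
lemma face_eq: "x \<in> D \<Longrightarrow> y \<in> face x \<Longrightarrow> face y = face x"
  unfolding face_of_def using orb_eq[OF finD bphi] by blast
lemma face_phi: "x \<in> D \<Longrightarrow> face (\<sigma> (\<alpha> x)) = face x"
  using face_eq[of x "\<sigma> (\<alpha> x)"] orb_step[of "\<sigma> \<circ> \<alpha>" x] unfolding face_of_def by auto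
lemma face_sigma: "y \<in> D \<Longrightarrow> face (\<sigma> y) = face (\<alpha> y)"
  using face_phi[OF aD, of y] aa by simp

lemma OutD: "Out \<subseteq> D" using OutF face_sub unfolding map_faces_def by auto
lemma in_Out: "x \<in> D \<Longrightarrow> x \<in> Out \<longleftrightarrow> face x = Out"
proof -
  assume x: "x \<in> D"
  obtain d1 where d1: "d1 \<in> D" "Out = face d1" using OutF unfolding map_faces_def by auto
  show ?thesis using face_eq[OF d1(1)] d1 face_self by metis
qed

lemma I_face: "F \<in> map_faces D \<sigma> \<alpha> \<Longrightarrow> d \<in> F \<Longrightarrow> face d = F"
  unfolding map_faces_def using face_eq by auto
lemma I_sub: "F \<in> map_faces D \<sigma> \<alpha> \<Longrightarrow> F \<subseteq> D"
  unfolding map_faces_def using face_sub by auto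

lemma faceI: "x \<in> D \<Longrightarrow> x \<notin> Out \<Longrightarrow> face x \<in> I"
  using in_Out unfolding map_faces_def by auto

lemma vertex_back:
  assumes S: "S \<subseteq> I" and cl: "\<forall>F\<in>S. \<forall>d\<in>F. \<alpha> d \<notin> Out \<longrightarrow> face (\<alpha> d) \<in> S"
    and d: "d \<in> Out" and P: "face (\<alpha> (\<sigma> (\<alpha> d))) \<in> S"
  shows "face (\<alpha> d) \<in> S"
proof -
  define oo where "oo = \<sigma> (\<alpha> d)"
  have dD: "d \<in> D" using d OutD by auto
  have oD: "oo \<in> D" using oo_def sD aD dD by auto
  have oO: "oo \<in> Out" using in_Out[OF oD] in_Out[OF dD] d face_phi[OF dD] oo_def by auto
  have sub: "\<sigma> ` D \<subseteq> D" using sD by auto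
  obtain N where N: "N > 0" "(\<sigma> ^^ N) oo = oo" using periodic[OF finD bs oD] by auto
  have ex: "\<exists>k. k > 0 \<and> (\<sigma> ^^ k) oo \<in> Out" using N oO by auto
  define k where "k = (LEAST k. k > 0 \<and> (\<sigma> ^^ k) oo \<in> Out)"
  have k: "k > 0" "(\<sigma> ^^ k) oo \<in> Out" using LeastI_ex[OF ex] unfolding k_def by auto
  have kmin: "(\<sigma> ^^ m) oo \<notin> Out" if "0 < m" "m < k" for m
    using not_less_Least[of m "\<lambda>k. k > 0 \<and> (\<sigma> ^^ k) oo \<in> Out"] that unfolding k_def by auto
  have k2: "k \<noteq> 1"
  proof
    assume "k = 1"
    then have "\<sigma> oo \<in> Out" using k by simp
    then have "face (\<alpha> oo) = Out" using face_sigma[OF oD] in_Out sD oD by auto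
    then have "\<alpha> oo \<in> Out" using in_Out aD oD by auto
    then show False using Oa oO by auto
  qed
  have ind: "\<And>n. 0 < n \<Longrightarrow> n < k \<Longrightarrow> face ((\<sigma> ^^ n) oo) \<in> S"
  proof -
    fix n show "0 < n \<Longrightarrow> n < k \<Longrightarrow> face ((\<sigma> ^^ n) oo) \<in> S"
    proof (induction n)
      case 0 then show ?case by simp
    next
      case (Suc n)
      show ?case
      proof (cases "n = 0")
        case True
        then show ?thesis using face_sigma[OF oD] P oo_def by simp
      next
        case False
        let ?y = "(\<sigma> ^^ n) oo"
        have yD: "?y \<in> D" using funpow_in[OF sub oD] .
        have IH: "face ?y \<in> S" using Suc False by simp
        have "(\<sigma> ^^ Suc n) oo \<notin> Out" using kmin[of "Suc n"] Suc.prems by blast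
        then have "face (\<sigma> ?y) \<noteq> Out" using in_Out sD yD by auto
        then have "\<alpha> ?y \<notin> Out" using face_sigma[OF yD] in_Out aD yD by auto
        then have "face (\<alpha> ?y) \<in> S" using cl IH face_self by blast
        then show ?thesis using face_sigma[OF yD] by simp
      qed
    qed
  qed
  have kD: "(\<sigma> ^^ k) oo \<in> D" using funpow_in[OF sub oD] .
  have "(\<sigma> ^^ k) oo \<in> orb \<sigma> oo" unfolding orb_def by auto
  then have "orb \<sigma> ((\<sigma> ^^ k) oo) = orb \<sigma> oo" by (rule orb_eq[OF finD bs oD])
  then have ko: "(\<sigma> ^^ k) oo = oo" using inj_onD[OF injO _ k(2) oO] by simp
  define j where "j = k - 1"
  have j: "k = Suc j" "j > 0" using k k2 unfolding j_def by auto
  have jD: "(\<sigma> ^^ j) oo \<in> D" using funpow_in[OF sub oD] .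
  have "\<sigma> ((\<sigma> ^^ j) oo) = \<sigma> (\<alpha> d)" using ko j oo_def by simp
  then have "(\<sigma> ^^ j) oo = \<alpha> d" using inj_onD[OF bij_betw_imp_inj_on[OF bs] _ jD aD[OF dD]] by simp
  then show ?thesis using ind[of j] j by simp
qed

lemma connected_faces:
  assumes S: "S \<subseteq> I" and ne: "S \<noteq> {}" and cl: "\<forall>F\<in>S. \<forall>d\<in>F. \<alpha> d \<notin> Out \<longrightarrow> face (\<alpha> d) \<in> S"
  shows "face (\<alpha> d0) \<in> S"
proof (cases "\<exists>d\<in>Out. face (\<alpha> d) \<in> S")
  case True
  then obtain d where d: "d \<in> Out" "face (\<alpha> d) \<in> S" by blast
  obtain d1 where d1: "d1 \<in> D" "Out = face d1" using OutF unfolding map_faces_def by blast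
  let ?p = "\<sigma> \<circ> \<alpha>"
  have inO: "(?p ^^ n) d1 \<in> Out" for n unfolding d1(2) face_of_def orb_def by blast
  have bk: "face (\<alpha> ((?p ^^ i) d1)) \<in> S" if "face (\<alpha> ((?p ^^ (i + t)) d1)) \<in> S" for t i
    using that
  proof (induction t arbitrary: i)
    case 0 then show ?case by simp
  next
    case (Suc t)
    have "i + Suc t = Suc i + t" by simp
    then have "face (\<alpha> ((?p ^^ (Suc i + t)) d1)) \<in> S" using Suc.prems by metis
    then have "face (\<alpha> ((?p ^^ (Suc i)) d1)) \<in> S" by (rule Suc.IH)
    then have "face (\<alpha> (\<sigma> (\<alpha> ((?p ^^ i) d1)))) \<in> S" by simp
    then show ?case by (rule vertex_back[OF S cl inO])
  qed
  obtain b where b: "d = (?p ^^ b) d1" using d(1) unfolding d1(2) face_of_def orb_def by blast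
  obtain a where a: "d0 = (?p ^^ a) d1" using d0 unfolding d1(2) face_of_def orb_def by blast
  obtain N where N: "N > 0" "(?p ^^ N) d1 = d1" using periodic[OF finD bphi d1(1)] by blast
  have "face (\<alpha> ((?p ^^ (0 + b)) d1)) \<in> S" using d b by simp
  then have "face (\<alpha> ((?p ^^ 0) d1)) \<in> S" by (rule bk)
  moreover have "(?p ^^ (N * a)) d1 = d1" by (rule funpow_period[OF N(2)])
  ultimately have "face (\<alpha> ((?p ^^ (N * a)) d1)) \<in> S" by simp
  moreover have "N * a = a + (N * a - a)" using N(1) by simp
  ultimately have "face (\<alpha> ((?p ^^ (a + (N * a - a))) d1)) \<in> S" by metis
  then have "face (\<alpha> ((?p ^^ a) d1)) \<in> S" by (rule bk)
  then show ?thesis using a by simp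
next
  case False
  define X where "X = \<Union>S"
  have XD: "X \<subseteq> D" using S I_sub unfolding X_def by blast
  have clX: "\<sigma> x \<in> X \<and> \<alpha> x \<in> X" if x: "x \<in> X" for x
  proof -
    obtain F where F: "F \<in> S" "x \<in> F" using x unfolding X_def by blast
    have FI: "F \<in> map_faces D \<sigma> \<alpha>" using F S by blast
    have fx: "face x = F" using I_face[OF FI F(2)] .
    have xD: "x \<in> D" using x XD by blast
    have "\<alpha> x \<notin> Out"
    proof
      assume ax: "\<alpha> x \<in> Out"
      have "face (\<alpha> (\<alpha> x)) \<in> S" using aa[OF xD] fx F(1) by simp
      then show False using False ax by blast
    qed
    then have fa: "face (\<alpha> x) \<in> S" using cl F by blast
    have "\<alpha> x \<in> face (\<alpha> x)" by (rule face_self)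
    moreover have "\<sigma> x \<in> face (\<alpha> x)" using face_self[of "\<sigma> x"] face_sigma[OF xD] by simp
    ultimately show ?thesis using fa unfolding X_def by blast
  qed
  obtain F where F: "F \<in> S" using ne by blast
  have FI: "F \<in> map_faces D \<sigma> \<alpha>" using F S by blast
  obtain x0 where x0: "x0 \<in> D" "F = face x0" using FI unfolding map_faces_def by blast
  have xX: "x0 \<in> X" using F x0 face_self[of x0] unfolding X_def by blast
  have d0D: "d0 \<in> D" using d0 OutD by blast
  have "(x0, d0) \<in> (\<Union>d\<in>D. {(d, \<sigma> d), (d, \<alpha> d)})\<^sup>*" using conn[OF x0(1) d0D] .
  then have "d0 \<in> X"
  proof (induction rule: rtrancl_induct)
    case base then show ?case using xX .
  next
    case (step y z)
    then obtain e where "e \<in> D" "(y, z) \<in> {(e, \<sigma> e), (e, \<alpha> e)}" by blast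
    then have "z = \<sigma> y \<or> z = \<alpha> y" by blast
    then show ?case using clX[OF step.IH] by blast
  qed
  then obtain G where G: "G \<in> S" "d0 \<in> G" unfolding X_def by blast
  have GI: "G \<in> map_faces D \<sigma> \<alpha>" "G \<noteq> Out" using G(1) S by blast+
  have "face d0 = G" using I_face[OF GI(1) G(2)] .
  moreover have "face d0 = Out" using in_Out[OF d0D] d0 by blast
  ultimately show ?thesis using GI(2) by blast
qed

end


lemma inj_imp_surj_lin:
  fixes C :: "'x \<Rightarrow> 'x \<Rightarrow> complex" and b :: "'x \<Rightarrow> complex"
  assumes fin: "finite I"
  and inj: "\<And>h. (\<forall>F\<in>I. (\<Sum>G\<in>I. C F G * h G) = 0) \<Longrightarrow> \<forall>G\<in>I. h G = 0"
  shows "\<exists>h. \<forall>F\<in>I. (\<Sum>G\<in>I. C F G * h G) = b F"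
proof -
  define n where "n = card I"
  obtain idx where idx: "bij_betw idx {0..<n} I"
    using ex_bij_betw_nat_finite[OF fin] n_def by (metis atLeast0LessThan)
  define ji where "ji = the_inv_into {0..<n} idx"
  have ji1: "\<And>G. G \<in> I \<Longrightarrow> ji G < n \<and> idx (ji G) = G"
    using idx unfolding ji_def
    by (metis atLeastLessThan_iff bij_betw_def f_the_inv_into_f the_inv_into_into subset_refl)
  have ji2: "\<And>i. i < n \<Longrightarrow> ji (idx i) = i"
    using idx unfolding ji_def bij_betw_def by (simp add: the_inv_into_f_f)
  define A where "A = mat n n (\<lambda>(i,j). C (idx i) (idx j))"
  have A: "A \<in> carrier_mat n n" unfolding A_def by simp
  have sumre: "\<And>i (v::complex vec). i < n \<Longrightarrow> v \<in> carrier_vec n \<Longrightarrow>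
     (A *\<^sub>v v) $ i = (\<Sum>G\<in>I. C (idx i) G * v $ (ji G))"
  proof -
    fix i and v :: "complex vec" assume i: "i < n" and v: "v \<in> carrier_vec n"
    have "(A *\<^sub>v v) $ i = (\<Sum>j<n. C (idx i) (idx j) * v $ j)"
      using i v unfolding A_def by (simp add: mult_mat_vec_def scalar_prod_def lessThan_atLeast0)
    also have "\<dots> = (\<Sum>G\<in>I. C (idx i) G * v $ (ji G))"
      using sum.reindex_bij_betw[OF idx, of "\<lambda>G. C (idx i) G * v $ (ji G)"] ji2
      by (simp add: lessThan_atLeast0)
    finally show "(A *\<^sub>v v) $ i = (\<Sum>G\<in>I. C (idx i) G * v $ (ji G))" .
  qed
  have "det A \<noteq> 0"
  proof
    assume "det A = 0"
    then obtain v where v: "v \<in> carrier_vec n" "v \<noteq> 0\<^sub>v n" "A *\<^sub>v v = 0\<^sub>v n"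
      using det_0_iff_vec_prod_zero[OF A] by auto
    define h where "h G = v $ (ji G)" for G
    have "\<forall>F\<in>I. (\<Sum>G\<in>I. C F G * h G) = 0"
    proof
      fix F assume F: "F \<in> I"
      have "(A *\<^sub>v v) $ (ji F) = 0" using v(3) ji1[OF F] by simp
      then show "(\<Sum>G\<in>I. C F G * h G) = 0" using sumre[OF _ v(1), of "ji F"] ji1[OF F]
        by (simp add: h_def)
    qed
    then have "\<forall>G\<in>I. h G = 0" by (rule inj)
    then have "v = 0\<^sub>v n"
    proof (intro eq_vecI)
      fix i assume "\<forall>G\<in>I. h G = 0" "i < dim_vec (0\<^sub>v n :: complex vec)"
      then show "v $ i = 0\<^sub>v n $ i"
        using ji2 idx unfolding h_def bij_betw_def by force
    qed (use v in auto)
    with v(2) show False by simp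
  qed
  then have "A \<in> Units (ring_mat TYPE(complex) n ())" using det_non_zero_imp_unit[OF A, where b="()"] by simp
  then obtain B where B: "B \<in> carrier_mat n n" "A * B = 1\<^sub>m n"
    unfolding Units_def ring_mat_def by auto
  define bv where "bv = vec n (\<lambda>i. b (idx i))"
  define x where "x = B *\<^sub>v bv"
  have x: "x \<in> carrier_vec n" using B unfolding x_def bv_def by simp
  have Ax: "A *\<^sub>v x = bv" unfolding x_def
    using assoc_mult_mat_vec[OF A B(1), of bv] B bv_def by simp
  show ?thesis
  proof (intro exI ballI)
    fix F assume F: "F \<in> I"
    have "(A *\<^sub>v x) $ (ji F) = b F" using Ax ji1[OF F] bv_def by simp
    then show "(\<Sum>G\<in>I. C F G * x $ (ji G)) = b F" using sumre[OF _ x, of "ji F"] ji1[OF F] by simp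
  qed
qed


context dm begin

definition w :: "'d \<Rightarrow> real" where "w d = 1 / \<rho> (orb \<alpha> d)"
definition nf :: "'d \<Rightarrow> 'd set" where "nf d = (if \<alpha> d \<in> Out then face d else face (\<alpha> d))"
definition Lr :: "('d set \<Rightarrow> real) \<Rightarrow> 'd set \<Rightarrow> real" where
  "Lr u F = (\<Sum>d\<in>F. w d * (u F - (if \<alpha> d = d0 then 0 else u (nf d))))"
definition Lc :: "('d set \<Rightarrow> complex) \<Rightarrow> 'd set \<Rightarrow> complex" where
  "Lc h F = (\<Sum>d\<in>F. complex_of_real (w d) * (h F - (if \<alpha> d = d0 then 0 else h (nf d))))"
definition Cf :: "'d set \<Rightarrow> 'd set \<Rightarrow> complex" where
  "Cf F G = (\<Sum>d\<in>F. complex_of_real (w d) * ((if G = F then 1 else 0) - (if \<alpha> d = d0 then 0 else if nf d = G then 1 else 0)))"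
definition bv :: "complex \<Rightarrow> ('d \<Rightarrow> complex) \<Rightarrow> 'd set \<Rightarrow> complex" where
  "bv c a F = (\<Sum>d\<in>F. complex_of_real (w d) * (if \<alpha> d = d0 then c else if \<alpha> d \<in> Out then a (\<alpha> d) else 0))"

lemma w_pos: "d \<in> D \<Longrightarrow> w d > 0"
  using rho unfolding w_def map_edges_def by auto

lemma nf_I: "F \<in> I \<Longrightarrow> d \<in> F \<Longrightarrow> nf d \<in> I"
proof -
  assume F: "F \<in> I" and d: "d \<in> F"
  have dD: "d \<in> D" using F d I_sub by auto
  show "nf d \<in> I"
  proof (cases "\<alpha> d \<in> Out")
    case True then show ?thesis using I_face F d unfolding nf_def by auto
  next
    case False then show ?thesis using faceI[OF aD[OF dD]] unfolding nf_def by auto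
  qed
qed

lemma finI: "finite (map_faces D \<sigma> \<alpha>)" using finD unfolding map_faces_def by auto

lemma maxp:
  assumes L: "\<forall>F\<in>I. Lr u F = 0" shows "\<forall>F\<in>I. u F \<le> 0"
proof (rule ccontr)
  assume "\<not> (\<forall>F\<in>I. u F \<le> 0)"
  then obtain F1 where F1: "F1 \<in> I" "u F1 > 0" by (meson not_le)
  define M where "M = Max (u ` I)"
  have finI': "finite I" using finI by blast
  have fin: "finite (u ` I)" using finI' by blast
  have Mall: "u G \<le> M" if "G \<in> I" for G unfolding M_def using fin that by simp
  have Mpos: "M > 0" using Mall[OF F1(1)] F1(2) by linarith
  have "M \<in> u ` I" unfolding M_def using fin F1(1) by (intro Max_in) blast+
  then obtain G0 where G0: "G0 \<in> I" "u G0 = M" by blast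
  define S where "S = {G\<in>I. u G = M}"
  have Sne: "S \<noteq> {}" using G0 unfolding S_def by blast
  have SI: "S \<subseteq> I" unfolding S_def by blast
  have key: "\<alpha> d \<noteq> d0 \<and> u (nf d) = M" if G: "G \<in> S" and d: "d \<in> G" for G d
  proof -
    have GI: "G \<in> I" and uG: "u G = M" using G unfolding S_def by blast+
    have GF: "G \<in> map_faces D \<sigma> \<alpha>" using GI by blast
    have finG: "finite G" using I_sub[OF GF] finD finite_subset by blast
    let ?v = "\<lambda>d. (if \<alpha> d = d0 then 0 else u (nf d))"
    let ?t = "\<lambda>d. w d * (u G - ?v d)"
    have nn: "0 \<le> ?t d'" if d': "d' \<in> G" for d'
    proof -
      have wp: "w d' > 0" by (rule w_pos[OF subsetD[OF I_sub[OF GF] d']])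
      have "?v d' \<le> u G"
      proof (cases "\<alpha> d' = d0")
        case True then show ?thesis using Mpos uG by simp
      next
        case False then show ?thesis using Mall[OF nf_I[OF GI d']] uG by simp
      qed
      then have "0 \<le> u G - ?v d'" by linarith
      then show "0 \<le> ?t d'" by (rule mult_nonneg_nonneg[OF less_imp_le[OF wp]])
    qed
    have sz: "sum ?t G = 0" using L[rule_format, OF GI] unfolding Lr_def .
    have "\<forall>x\<in>G. ?t x = 0" by (rule iffD1[OF sum_nonneg_eq_0_iff[OF finG nn] sz])
    then have "?t d = 0" using d by (rule bspec)
    moreover have "w d > 0" by (rule w_pos[OF subsetD[OF I_sub[OF GF] d]])
    ultimately have e: "?v d = M" using uG by simp
    show ?thesis
    proof (cases "\<alpha> d = d0")
      case True then show ?thesis using e Mpos by simp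
    next
      case False then show ?thesis using e by simp
    qed
  qed
  have cl: "\<forall>F\<in>S. \<forall>d\<in>F. \<alpha> d \<notin> Out \<longrightarrow> face (\<alpha> d) \<in> S"
  proof (intro ballI impI)
    fix F d assume F: "F \<in> S" and d: "d \<in> F" and a: "\<alpha> d \<notin> Out"
    have FI: "F \<in> I" using F SI by blast
    have "nf d = face (\<alpha> d)" using a unfolding nf_def by simp
    moreover have "nf d \<in> I" using nf_I[OF FI d] .
    moreover have "u (nf d) = M" using key[OF F d] by blast
    ultimately show "face (\<alpha> d) \<in> S" unfolding S_def by simp
  qed
  have fS: "face (\<alpha> d0) \<in> S" using connected_faces[OF SI Sne cl] .
  have d0D: "d0 \<in> D" using d0 OutD by blast
  have "\<alpha> (\<alpha> d0) = d0" using aa[OF d0D] .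
  moreover have "\<alpha> d0 \<in> face (\<alpha> d0)" by (rule face_self)
  ultimately show False using key[OF fS] by blast
qed

lemma Re_Lc: "Re (Lc h F) = Lr (\<lambda>G. Re (h G)) F"
  unfolding Lc_def Lr_def Re_sum by (intro sum.cong refl) simp
lemma Im_Lc: "Im (Lc h F) = Lr (\<lambda>G. Im (h G)) F"
  unfolding Lc_def Lr_def Im_sum by (intro sum.cong refl) simp
lemma Lr_neg: "Lr (\<lambda>G. - u G) F = - Lr u F"
  unfolding Lr_def sum_negf[symmetric] by (intro sum.cong refl) (simp add: algebra_simps)

lemma real_zero: "\<forall>F\<in>I. Lr u F = 0 \<Longrightarrow> \<forall>F\<in>I. u F = 0"
proof -
  assume L: "\<forall>F\<in>I. Lr u F = 0"
  have "\<forall>F\<in>I. u F \<le> 0" using maxp[OF L] .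
  moreover have "\<forall>F\<in>I. - u F \<le> 0" using maxp[of "\<lambda>G. - u G"] L Lr_neg by simp
  ultimately show ?thesis by force
qed

lemma Lc_inj: "\<forall>F\<in>I. Lc h F = 0 \<Longrightarrow> \<forall>F\<in>I. h F = 0"
proof -
  assume L: "\<forall>F\<in>I. Lc h F = 0"
  have "\<forall>F\<in>I. Re (h F) = 0" using real_zero[of "\<lambda>G. Re (h G)"] L Re_Lc by (metis zero_complex.sel(1))
  moreover have "\<forall>F\<in>I. Im (h F) = 0" using real_zero[of "\<lambda>G. Im (h G)"] L Im_Lc by (metis zero_complex.sel(2))
  ultimately show ?thesis by (simp add: complex_eq_iff)
qed

lemma Lc_coef: assumes F: "F \<in> I" shows "Lc h F = (\<Sum>G\<in>I. Cf F G * h G)"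
proof -
  have "(\<Sum>G\<in>I. Cf F G * h G) = (\<Sum>G\<in>I. \<Sum>d\<in>F. complex_of_real (w d) * ((if G = F then 1 else 0) - (if \<alpha> d = d0 then 0 else if nf d = G then 1 else 0)) * h G)"
    unfolding Cf_def by (simp add: sum_distrib_right)
  also have "\<dots> = (\<Sum>d\<in>F. \<Sum>G\<in>I. complex_of_real (w d) * ((if G = F then 1 else 0) - (if \<alpha> d = d0 then 0 else if nf d = G then 1 else 0)) * h G)"
    by (rule sum.swap)
  also have "\<dots> = Lc h F" unfolding Lc_def
  proof (rule sum.cong[OF refl])
    fix d assume d: "d \<in> F"
    have n: "nf d \<in> I" using nf_I[OF F d] .
    let ?c = "complex_of_real (w d)"
    have pt: "\<And>G. ?c * ((if G = F then 1 else 0) - (if \<alpha> d = d0 then 0 else if nf d = G then 1 else 0)) * h G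
       = ?c * (if G = F then h G else 0) - ?c * (if \<alpha> d = d0 then 0 else (if nf d = G then h G else 0))"
      by (simp add: algebra_simps)
    have s1: "(\<Sum>G\<in>I. (if G = F then h G else 0)) = h F" using F finI by (simp add: sum.delta')
    have s2: "(\<Sum>G\<in>I. (if \<alpha> d = d0 then 0 else (if nf d = G then h G else 0))) = (if \<alpha> d = d0 then 0 else h (nf d))"
      using n finI by (cases "\<alpha> d = d0") (simp_all add: sum.delta)
    show "(\<Sum>G\<in>I. complex_of_real (w d) * ((if G = F then 1 else 0) - (if \<alpha> d = d0 then 0 else if nf d = G then 1 else 0)) * h G)
        = complex_of_real (w d) * (h F - (if \<alpha> d = d0 then 0 else h (nf d)))"
      unfolding pt sum_subtractf sum_distrib_left[symmetric] s1 s2 by (simp add: right_diff_distrib)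
  qed
  finally show ?thesis by simp
qed

lemma Lc_diff: "Lc (\<lambda>G. x G - y G) F = Lc x F - Lc y F"
  unfolding Lc_def sum_subtractf[symmetric] by (intro sum.cong refl) (simp add: algebra_simps split: if_split)

lemma harm:
  assumes F: "F \<in> I" and bc: "\<forall>e\<in>Out - {d0}. bd_integral \<sigma> \<alpha> f e = a e"
  shows "harmonic_at_face \<sigma> \<alpha> Out \<rho> f F \<longleftrightarrow> Lc (\<lambda>G. f (FaceV G)) F = bv (f (Bd d0)) a F"
proof -
  have "(\<Sum>d\<in>F. complex_of_real (1 / \<rho> (orb \<alpha> d)) * (f (FaceV F) - f (dual_nbr \<sigma> \<alpha> Out d)))
     = (\<Sum>d\<in>F. complex_of_real (w d) * (f (FaceV F) - (if \<alpha> d = d0 then 0 else f (FaceV (nf d))))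
         - complex_of_real (w d) * (if \<alpha> d = d0 then f (Bd d0) else if \<alpha> d \<in> Out then a (\<alpha> d) else 0))"
  proof (rule sum.cong[OF refl])
    fix d assume d: "d \<in> F"
    have dD: "d \<in> D" using F d I_sub[of F] by blast
    have fd: "face d = F" using I_face[of F d] F d by blast
    have ad: "\<alpha> (\<alpha> d) = d" using aa dD .
    have cw: "complex_of_real (1 / \<rho> (orb \<alpha> d)) = complex_of_real (w d)" unfolding w_def ..
    show "complex_of_real (1 / \<rho> (orb \<alpha> d)) * (f (FaceV F) - f (dual_nbr \<sigma> \<alpha> Out d)) =
      complex_of_real (w d) * (f (FaceV F) - (if \<alpha> d = d0 then 0 else f (FaceV (nf d)))) -
      complex_of_real (w d) * (if \<alpha> d = d0 then f (Bd d0) else if \<alpha> d \<in> Out then a (\<alpha> d) else 0)"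
    proof (cases "\<alpha> d \<in> Out")
      case False
      then have "\<alpha> d \<noteq> d0" using d0 by auto
      then show ?thesis using False unfolding cw dual_nbr_def nf_def by (simp add: algebra_simps)
    next
      case True
      show ?thesis
      proof (cases "\<alpha> d = d0")
        case True
        then show ?thesis using d0 unfolding cw dual_nbr_def by (simp add: algebra_simps)
      next
        case False
        then have "bd_integral \<sigma> \<alpha> f (\<alpha> d) = a (\<alpha> d)" using bc True by auto
        then have "f (Bd (\<alpha> d)) = f (FaceV F) + a (\<alpha> d)"
          unfolding bd_integral_def using ad fd by (simp add: algebra_simps)
        then show ?thesis using True False fd unfolding cw dual_nbr_def nf_def by (simp add: algebra_simps)
      qed
    qed
  qed
  also have "\<dots> = Lc (\<lambda>G. f (FaceV G)) F - bv (f (Bd d0)) a F"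
    unfolding Lc_def bv_def by (simp add: sum_subtractf)
  finally show ?thesis unfolding harmonic_at_face_def by simp
qed

lemma main:
  shows "\<exists>f. (\<forall>F\<in>map_faces D \<sigma> \<alpha> - {Out}. harmonic_at_face \<sigma> \<alpha> Out \<rho> f F)
             \<and> f (Bd d0) = f0
             \<and> (\<forall>d\<in>Out - {d0}. bd_integral \<sigma> \<alpha> f d = a d)
             \<and> (\<forall>g. ((\<forall>F\<in>map_faces D \<sigma> \<alpha> - {Out}. harmonic_at_face \<sigma> \<alpha> Out \<rho> g F)
                      \<and> g (Bd d0) = f0
                      \<and> (\<forall>d\<in>Out - {d0}. bd_integral \<sigma> \<alpha> g d = a d))
                   \<longrightarrow> (\<forall>v\<in>dual_vertices D \<sigma> \<alpha> Out. g v = f v))"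
proof -
  have "\<exists>h. \<forall>F\<in>I. (\<Sum>G\<in>I. Cf F G * h G) = bv f0 a F"
  proof (rule inj_imp_surj_lin)
    show "finite I" using finI by auto
    fix h assume "\<forall>F\<in>I. (\<Sum>G\<in>I. Cf F G * h G) = 0"
    then have "\<forall>F\<in>I. Lc h F = 0" using Lc_coef by auto
    then show "\<forall>G\<in>I. h G = 0" by (rule Lc_inj)
  qed
  then obtain h where h: "\<forall>F\<in>I. Lc h F = bv f0 a F" using Lc_coef by auto
  define f where "f v = (case v of FaceV G \<Rightarrow> h G | Bd e \<Rightarrow> if e = d0 then f0 else h (face (\<alpha> e)) + a e)" for v
  have bcf: "\<forall>e\<in>Out - {d0}. bd_integral \<sigma> \<alpha> f e = a e"
    unfolding bd_integral_def f_def by auto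
  have fd0: "f (Bd d0) = f0" unfolding f_def by simp
  have fF: "(\<lambda>G. f (FaceV G)) = h" unfolding f_def by auto
  have hf: "\<forall>F\<in>I. harmonic_at_face \<sigma> \<alpha> Out \<rho> f F"
    using harm[OF _ bcf] h fF fd0 by auto
  show ?thesis
  proof (intro exI conjI allI impI ballI)
    show "\<And>F. F \<in> I \<Longrightarrow> harmonic_at_face \<sigma> \<alpha> Out \<rho> f F" using hf by auto
    show "f (Bd d0) = f0" by (rule fd0)
    show "\<And>d. d \<in> Out - {d0} \<Longrightarrow> bd_integral \<sigma> \<alpha> f d = a d" using bcf by auto
    fix g v
    assume g: "(\<forall>F\<in>I. harmonic_at_face \<sigma> \<alpha> Out \<rho> g F) \<and> g (Bd d0) = f0 \<and>
         (\<forall>d\<in>Out - {d0}. bd_integral \<sigma> \<alpha> g d = a d)"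
      and v: "v \<in> dual_vertices D \<sigma> \<alpha> Out"
    have "\<forall>F\<in>I. Lc (\<lambda>G. g (FaceV G) - f (FaceV G)) F = 0"
    proof
      fix F assume F: "F \<in> I"
      have "Lc (\<lambda>G. g (FaceV G)) F = bv f0 a F" using harm[OF F, of g a] g F by auto
      moreover have "Lc (\<lambda>G. f (FaceV G)) F = bv f0 a F" using harm[OF F bcf] hf F fd0 by auto
      ultimately show "Lc (\<lambda>G. g (FaceV G) - f (FaceV G)) F = 0" using Lc_diff by simp
    qed
    then have eqF: "\<forall>F\<in>I. g (FaceV F) = f (FaceV F)" using Lc_inj by fastforce
    show "g v = f v"
    proof (cases v)
      case (FaceV F)
      then show ?thesis using v eqF unfolding dual_vertices_def by auto
    next
      case (Bd e)
      then have e: "e \<in> Out" using v unfolding dual_vertices_def by auto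
      show ?thesis
      proof (cases "e = d0")
        case True then show ?thesis using Bd g fd0 by simp
      next
        case False
        have eD: "e \<in> D" using e OutD by auto
        have I: "face (\<alpha> e) \<in> I" using faceI[OF aD[OF eD]] Oa e by auto
        have "bd_integral \<sigma> \<alpha> g e = bd_integral \<sigma> \<alpha> f e" using g bcf e False by auto
        then show ?thesis using Bd eqF I unfolding bd_integral_def by auto
      qed
    qed
  qed
qed

end
theorem mainTheorem7:
  fixes D :: "'d set" and \<sigma> \<alpha> :: "'d \<Rightarrow> 'd" and Out :: "'d set"
    and \<rho> :: "'d set \<Rightarrow> real" and d0 :: 'd and f0 :: complex and a :: "'d \<Rightarrow> complex"
  assumes "disc_map D \<sigma> \<alpha> Out"
    and "\<forall>e\<in>map_edges D \<alpha>. \<rho> e > 0"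
    and "d0 \<in> Out"
  shows "\<exists>f. (\<forall>F\<in>map_faces D \<sigma> \<alpha> - {Out}. harmonic_at_face \<sigma> \<alpha> Out \<rho> f F)
             \<and> f (Bd d0) = f0
             \<and> (\<forall>d\<in>Out - {d0}. bd_integral \<sigma> \<alpha> f d = a d)
             \<and> (\<forall>g. ((\<forall>F\<in>map_faces D \<sigma> \<alpha> - {Out}. harmonic_at_face \<sigma> \<alpha> Out \<rho> g F)
                      \<and> g (Bd d0) = f0
                      \<and> (\<forall>d\<in>Out - {d0}. bd_integral \<sigma> \<alpha> g d = a d))
                   \<longrightarrow> (\<forall>v\<in>dual_vertices D \<sigma> \<alpha> Out. g v = f v))"
  using dm.main[OF dm.intro[OF assms]] .

end
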